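(* Let $L(0,n-1)$ be a path with thresholds $t$ as in the context, let $\lambda\ge1$, and let $0\le j<k\le n-1$ be such that $t(j)=t(k)=1$ and $t(j+1)=\cdots=t(k-1)=2$. Let $p:V\to\{0,1,2\}$ be any incentive function that solves the TBI problem on $L(0,n-1)$ with time bound $\lambda$ (i.e. $\mathsf{Influenced}[p,\lambda]=V$). Then $$\sum_{i=j+1}^{k-1}p(i)\ \ge\ \begin{cases} k-j-2 & \text{if $j+1$ is influenced by $j$ and $k-1$ is influenced by $k$},\\ k-j-1 & \text{if exactly one of: $j+1$ is influenced by $j$, $k-1$ is influenced by $k$},\\ k-j & \text{otherwise.}\end{cases}$$
   Context: Influence model: a network is a graph $G=(V,E)$; $N(v)$ is the neighbourhood of $v$ and $d(v)=|N(v)|$. A threshold function $t:V\to\{1,2,\dots\}$ satisfies $1\le t(v)\le d(v)$. An incentive function is $p:V\to\{0,1,2,\dots\}$ with $0\le p(v)\le t(v)$. The influence process starting from $p$: $\mathsf{Influenced}[p,0]=\{v: p(v)=t(v)\}$ and, for $\ell>0$, $\mathsf{Influenced}[p,\ell]=\mathsf{Influenced}[p,\ell-1]\cup\{v: |N(v)\cap \mathsf{Influenced}[p,\ell-1]|\ge t(v)-p(v)\}$. A node $v$ is influenced at round $\ell$ if it belongs to $\mathsf{Influenced}[p,\ell]$ but not to $\mathsf{Influenced}[p,\ell-1]$ (round $0$: belongs to $\mathsf{Influenced}[p,0]$). The TBI problem with time bound $\lambda$ asks for minimum-cost $p$ with $\mathsf{Influenced}[p,\lambda]=V$. The path $L(0,n-1)$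 has nodes $0,\dots,n-1$ and edges $\{i,i+1\}$, $0\le i\le n-2$; $t(0)=t(n-1)=1$ and $t(i)\in\{1,2\}$ for $1\le i\le n-2$. For neighbours $u,w$, "$u$ is influenced by $w$" means that $w$ is influenced at a round strictly earlier than the round at which $u$ is influenced (so $w$ contributes to the influence received by $u$). *)

theory Defs
  imports Main
begin

definition path_nbrs :: "nat \<Rightarrow> nat \<Rightarrow> nat set" where
  "path_nbrs n v = {u. u < n \<and> (u = v + 1 \<or> v = u + 1)}"

fun Influenced :: "nat \<Rightarrow> (nat \<Rightarrow> nat) \<Rightarrow> (nat \<Rightarrow> nat) \<Rightarrow> nat \<Rightarrow> nat set" where
  "Influenced n t p 0 = {v. v < n \<and> p v = t v}"
| "Influenced n t p (Suc l) = Influenced n t p l \<union>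
     {v. v < n \<and> card (path_nbrs n v \<inter> Influenced n t p l) \<ge> t v - p v}"

text \<open>The round at which v is influenced (meaningful when v is eventually influenced).\<close>
definition infl_round :: "nat \<Rightarrow> (nat \<Rightarrow> nat) \<Rightarrow> (nat \<Rightarrow> nat) \<Rightarrow> nat \<Rightarrow> nat" where
  "infl_round n t p v = (LEAST l. v \<in> Influenced n t p l)"

definition influenced_by :: "nat \<Rightarrow> (nat \<Rightarrow> nat) \<Rightarrow> (nat \<Rightarrow> nat) \<Rightarrow> nat \<Rightarrow> nat \<Rightarrow> bool" where
  "influenced_by n t p u w \<longleftrightarrow> infl_round n t p w < infl_round n t p u"

end

theory Submission
  imports Defs
begin

lemma comb:
  fixes f q :: "nat \<Rightarrow> nat"
  assumes "j + 1 < k"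
    and q2: "\<forall>i. j < i \<and> i < k \<longrightarrow> q i \<le> 2"
    and q0: "\<forall>i. j < i \<and> i < k \<longrightarrow> q i = 0 \<longrightarrow> f (i - 1) < f i \<and> f (i + 1) < f i"
    and qm: "\<forall>i. j < i \<and> i < k \<longrightarrow> f (i - 1) \<ge> f i \<longrightarrow> f (i + 1) \<ge> f i \<longrightarrow> q i = 2"
  shows "(\<Sum>i = j + 1..k - 1. int (q i)) \<ge> int k - int j
           - (if f j < f (j + 1) then 1 else 0) - (if f k < f (k - 1) then 1 else 0)"
  using assms
proof (induction "k - j" arbitrary: j k rule: less_induct)
  case less
  show ?case
  proof (cases "\<exists>a. j < a \<and> a < k \<and> q a = 0")
    case True
    then obtain a where a: "j < a" "a < k" "q a = 0" by blast
    have fa: "f (a - 1) < f a" "f (a + 1) < f a" using less.prems(3) a by auto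
    have split: "{j + 1..k - 1} = {j + 1..a - 1} \<union> {a} \<union> {a + 1..k - 1}" using a by auto
    have S: "(\<Sum>i = j + 1..k - 1. int (q i)) =
        (\<Sum>i = j + 1..a - 1. int (q i)) + int (q a) + (\<Sum>i = a + 1..k - 1. int (q i))"
    proof -
      have d1: "({j + 1..a - 1} \<union> {a}) \<inter> {a + 1..k - 1} = {}" by auto
      have d2: "{j + 1..a - 1} \<inter> {a} = {}" using a by auto
      have "(\<Sum>i \<in> {j + 1..a - 1} \<union> {a} \<union> {a + 1..k - 1}. int (q i)) =
         (\<Sum>i \<in> {j + 1..a - 1} \<union> {a}. int (q i)) + (\<Sum>i = a + 1..k - 1. int (q i))"
        by (rule sum.union_disjoint[OF _ _ d1]) auto
      moreover have "(\<Sum>i \<in> {j + 1..a - 1} \<union> {a}. int (q i)) =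
         (\<Sum>i = j + 1..a - 1. int (q i)) + (\<Sum>i \<in> {a}. int (q i))"
        by (rule sum.union_disjoint[OF _ _ d2]) auto
      ultimately show ?thesis unfolding split by simp
    qed
    have L: "(\<Sum>i = j + 1..a - 1. int (q i)) \<ge> int a - int j
           - (if f j < f (j + 1) then 1 else 0)"
    proof (cases "j + 1 < a")
      case True
      have "(\<Sum>i = j + 1..a - 1. int (q i)) \<ge> int a - int j
           - (if f j < f (j + 1) then 1 else 0) - (if f a < f (a - 1) then 1 else 0)"
        using less.prems a True by (intro less.hyps) auto
      then show ?thesis using fa by auto
    next
      case False
      then have "a = j + 1" using a by auto
      then show ?thesis using fa by auto
    qed
    have R: "(\<Sum>i = a + 1..k - 1. int (q i)) \<ge> int k - int a
           - (if f k < f (k - 1) then 1 else 0)"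
    proof (cases "a + 1 < k")
      case True
      have "(\<Sum>i = a + 1..k - 1. int (q i)) \<ge> int k - int a
           - (if f a < f (a + 1) then 1 else 0) - (if f k < f (k - 1) then 1 else 0)"
        using less.prems a True by (intro less.hyps) auto
      then show ?thesis using fa by auto
    next
      case False
      then have "k = a + 1" using a by auto
      then show ?thesis using fa by auto
    qed
    show ?thesis using S L R a by simp
  next
    case False
    have ge1: "int (q i) \<ge> 1" if "i \<in> {j + 1..k - 1}" for i
    proof -
      have "j < i" "i < k" using that less.prems(1) by auto
      then have "q i \<noteq> 0" using False by auto
      then show ?thesis by simp
    qed
    have "(\<Sum>i = j + 1..k - 1. int (q i)) \<ge> (\<Sum>i = j + 1..k - 1. 1)"
      by (rule sum_mono) (rule ge1)
    then have m: "(\<Sum>i = j + 1..k - 1. int (q i)) \<ge> int k - int j - 1"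
      using less.prems(1) by simp
    show ?thesis
    proof (cases "f j < f (j + 1) \<or> f k < f (k - 1)")
      case True
      then show ?thesis using m by auto
    next
      case nf: False
      obtain i0 where i0: "j < i0 \<and> i0 < k" "\<forall>y. j < y \<and> y < k \<longrightarrow> f i0 \<le> f y"
        using ex_has_least_nat[of "\<lambda>i. j < i \<and> i < k" "j + 1" f] less.prems(1) by auto
      have "f (i0 - 1) \<ge> f i0"
      proof (cases "i0 = j + 1")
        case True then show ?thesis using nf by auto
      next
        case False
        then have "j < i0 - 1" "i0 - 1 < k" using i0(1) by arith+
        then show ?thesis using i0(2) by blast
      qed
      moreover have "f (i0 + 1) \<ge> f i0"
      proof (cases "i0 = k - 1")
        case True then show ?thesis using nf i0 by auto
      next
        case False
        then have "j < i0 + 1" "i0 + 1 < k" using i0(1) by arith+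
        then show ?thesis using i0(2) by blast
      qed
      ultimately have q2: "q i0 = 2" using less.prems(4)[rule_format, of i0] i0(1) by blast
      have "(\<Sum>i = j + 1..k - 1. int (q i)) = int (q i0) + (\<Sum>i \<in> {j + 1..k - 1} - {i0}. int (q i))"
        using i0 by (subst sum.remove[of _ i0]) auto
      moreover have "(\<Sum>i \<in> {j + 1..k - 1} - {i0}. int (q i)) \<ge> (\<Sum>i \<in> {j + 1..k - 1} - {i0}. 1)"
        by (rule sum_mono) (rule ge1; auto)
      moreover have "card ({j + 1..k - 1} - {i0}) = k - j - 2" using i0 by auto
      ultimately show ?thesis using q2 less.prems(1) nf by auto
    qed
  qed
qed

lemma Infl_mono: "l \<le> l' \<Longrightarrow> Influenced n t p l \<subseteq> Influenced n t p l'"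
  by (induction l' ) (auto simp: le_Suc_eq)

lemma round_facts:
  assumes "v \<in> Influenced n t p l"
  shows "v \<in> Influenced n t p (infl_round n t p v)" "infl_round n t p v \<le> l"
    "\<And>l'. l' < infl_round n t p v \<Longrightarrow> v \<notin> Influenced n t p l'"
  unfolding infl_round_def
  using assms by (auto intro: LeastI Least_le dest: not_less_Least)

theorem lemma1:
  fixes n :: nat and t p :: "nat \<Rightarrow> nat" and lam j k :: nat
  assumes n2: "n \<ge> 2"
    and t_end: "t 0 = 1" "t (n - 1) = 1"
    and t_mid: "\<And>i. 1 \<le> i \<Longrightarrow> i \<le> n - 2 \<Longrightarrow> t i \<in> {1, 2}"
    and p_le: "\<And>v. v < n \<Longrightarrow> p v \<le> t v"
    and lam: "lam \<ge> 1"
    and jk: "j + 1 < k" "k \<le> n - 1"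
    and tj: "t j = 1" and tk: "t k = 1"
    and tmid2: "\<And>i. j < i \<Longrightarrow> i < k \<Longrightarrow> t i = 2"
    and solves: "Influenced n t p lam = {0..<n}"
  shows "(\<Sum>i = j + 1..k - 1. int (p i)) \<ge>
    (if influenced_by n t p (j + 1) j \<and> influenced_by n t p (k - 1) k
       then int k - int j - 2
     else if influenced_by n t p (j + 1) j \<noteq> influenced_by n t p (k - 1) k
       then int k - int j - 1
     else int k - int j)"
proof -
  define r where "r = infl_round n t p"
  have key: "p i = 2 \<or> (p i = 1 \<and> (r (i - 1) < r i \<or> r (i + 1) < r i))
      \<or> (p i = 0 \<and> r (i - 1) < r i \<and> r (i + 1) < r i)" if i: "j < i" "i < k" for i
  proof -
    have ti: "t i = 2" using tmid2 i by auto
    have pi: "p i \<le> 2" using p_le[of i] ti i jk by auto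
    have iin: "i \<in> Influenced n t p lam" using solves i jk by auto
    have nb: "path_nbrs n i = {i - 1, i + 1}" using i jk unfolding path_nbrs_def by auto
    have inr: "i \<in> Influenced n t p (r i)" using round_facts(1)[OF iin] r_def by simp
    show ?thesis
    proof (cases "r i")
      case 0
      then show ?thesis using inr ti by simp
    next
      case (Suc R)
      have notR: "i \<notin> Influenced n t p R" using round_facts(3)[OF iin, of R] Suc r_def by simp
      then have c: "card ({i - 1, i + 1} \<inter> Influenced n t p R) \<ge> 2 - p i"
        using inr Suc nb ti by simp
      have rb: "r u < r i" if "u \<in> Influenced n t p R" for u
        using round_facts(2)[OF that] Suc r_def by simp
      consider "p i = 2" | "p i = 1" | "p i = 0" using pi by linarith
      then show ?thesis
      proof cases
        case 1 then show ?thesis by simp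
      next
        case 2
        then have "{i - 1, i + 1} \<inter> Influenced n t p R \<noteq> {}" using c by (intro notI) simp
        then show ?thesis using 2 rb by blast
      next
        case 3
        then have "card ({i - 1, i + 1} \<inter> Influenced n t p R) \<ge> 2" using c by simp
        moreover have "card ({i - 1, i + 1} \<inter> Influenced n t p R) \<le> card {i - 1, i + 1}"
          by (rule card_mono) auto
        ultimately have "{i - 1, i + 1} \<inter> Influenced n t p R = {i - 1, i + 1}"
          using i by (cases "i - 1 \<in> Influenced n t p R"; cases "i + 1 \<in> Influenced n t p R") auto
        then show ?thesis using 3 rb by blast
      qed
    qed
  qed
  have C: "(\<Sum>i = j + 1..k - 1. int (p i)) \<ge> int k - int j
           - (if r j < r (j + 1) then 1 else 0) - (if r k < r (k - 1) then 1 else 0)"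
    apply (rule comb[OF jk(1)])
    using key by fastforce+
  show ?thesis using C unfolding influenced_by_def r_def[symmetric] by auto
qed

end
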